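(* Let $(X,d)$ be a metric space, $p>1$, $x_1,x_2,x_3\in X$ and $0\le r<t$. Then the function $$s\mapsto\sqrt{\bar H_p(x_1,r;x_2,s)}+\sqrt{\bar H_p(x_2,s;x_3,t)}$$ is increasing on $[t,+\infty)$, where $\bar H_p(x,r;y,t)=\mathfrak{M}_1(r,t)-\mathfrak{M}_{1-p}(r,t)\cos\big(d(x,y)\wedge\frac{\pi}{2}\big)$.
   Context: Power means: for $r,t\ge0$ and $q\neq0$, $\mathfrak{M}_q(r,t)=\big(\frac{r^q+t^q}{2}\big)^{1/q}$, except $\mathfrak{M}_q(r,t)=0$ when $q<0$ and $r=0$ or $t=0$. "Increasing" means non-decreasing. *)

theory Defs
  imports "HOL-Analysis.Analysis"
begin

definition power_mean :: "real \<Rightarrow> real \<Rightarrow> real \<Rightarrow> real" where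
  "power_mean q r t =
     (if q < 0 \<and> (r = 0 \<or> t = 0) then 0
      else ((r powr q + t powr q) / 2) powr (1 / q))"

definition Hbar :: "real \<Rightarrow> 'a::metric_space \<Rightarrow> real \<Rightarrow> 'a \<Rightarrow> real \<Rightarrow> real" where
  "Hbar p x r y t = power_mean 1 r t - power_mean (1 - p) r t * cos (min (dist x y) (pi / 2))"

end

theory Submission imports Defs begin

lemma deriv_step:
  fixes q b c s :: real
  assumes q: "q < 0" and b: "0 < b" and bs: "b \<le> s" and c: "0 \<le> c" "c \<le> 1"
  shows "\<exists>y. ((\<lambda>s. s/2 - c * ((b powr q + s powr q)/2) powr (1/q)) has_real_derivative y) (at s) \<and> y \<ge> 0"
proof -
  have s0: "s > 0" using b bs by linarith
  define X where "X = (b powr q + s powr q)/2"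
  have bq: "s powr q \<le> b powr q" using powr_mono2'[of q b s] q b bs by simp
  have Xs: "s powr q \<le> X" using bq unfolding X_def by simp
  have X0: "0 < X" using Xs s0 by (smt (verit) powr_gt_zero)
  have D: "((\<lambda>s. s/2 - c * ((b powr q + s powr q)/2) powr (1/q)) has_real_derivative
     (1/2 - c * ((1/q) * X powr (1/q - 1) * (q * s powr (q - 1) / 2)))) (at s)"
    unfolding X_def using s0 q b X0[unfolded X_def]
    by (auto intro!: derivative_eq_intros simp: field_simps)
  have e: "1/q - 1 \<le> 0" using q by (simp add: divide_nonpos_neg)
  have "X powr (1/q - 1) \<le> (s powr q) powr (1/q - 1)"
    using powr_mono2'[OF e _ Xs] s0 by simp
  also have "\<dots> = s powr (q * (1/q - 1))" by (simp add: powr_powr)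
  also have "q * (1/q - 1) = 1 - q" using q by (simp add: field_simps)
  finally have A: "X powr (1/q - 1) \<le> s powr (1 - q)" .
  have "X powr (1/q - 1) * s powr (q - 1) \<le> s powr (1 - q) * s powr (q - 1)"
    using A by (simp add: mult_right_mono)
  also have "\<dots> = 1" using s0 by (simp add: powr_add[symmetric])
  finally have B: "X powr (1/q - 1) * s powr (q - 1) \<le> 1" .
  have eq: "(1/q) * X powr (1/q - 1) * (q * s powr (q - 1) / 2) = X powr (1/q - 1) * s powr (q - 1) / 2"
    using q by (simp add: field_simps)
  have "c * (X powr (1/q - 1) * s powr (q - 1) / 2) \<le> 1 * (1/2)"
    using B c by (intro mult_mono) auto
  then show ?thesis using D eq by (intro exI[of _ "1/2 - c * ((1/q) * X powr (1/q - 1) * (q * s powr (q - 1) / 2))"]) auto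
qed

lemma mono_step:
  fixes q b c s s' :: real
  assumes q: "q < 0" and b: "0 < b" and bs: "b \<le> s" and ss: "s \<le> s'" and c: "0 \<le> c" "c \<le> 1"
  shows "s/2 - c * ((b powr q + s powr q)/2) powr (1/q) \<le> s'/2 - c * ((b powr q + s' powr q)/2) powr (1/q)"
proof (rule DERIV_nonneg_imp_nondecreasing[OF ss])
  fix x assume "s \<le> x" "x \<le> s'"
  then show "\<exists>y. ((\<lambda>s. s/2 - c * ((b powr q + s powr q)/2) powr (1/q)) has_real_derivative y) (at x) \<and> y \<ge> 0"
  proof -
    have "b \<le> x" using bs \<open>s \<le> x\<close> by linarith
    then show ?thesis using deriv_step[OF q b _ c, of x] by blast
  qed
qed

lemma cos_bounds: "0 \<le> cos (min (d::real) (pi/2)) \<and> cos (min d (pi/2)) \<le> 1" if "d \<ge> 0" for d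
proof -
  have "- (pi/2) \<le> min d (pi/2)" "min d (pi/2) \<le> pi/2" using that pi_gt_zero by (auto simp: min_def)
  then show ?thesis using cos_ge_zero by auto
qed

lemma pm1: "0 \<le> r \<Longrightarrow> 0 \<le> s \<Longrightarrow> power_mean 1 r s = (r + s)/2"
  by (simp add: power_mean_def)

lemma pmq: "q < 0 \<Longrightarrow> 0 < r \<Longrightarrow> 0 < s \<Longrightarrow> power_mean q r s = ((r powr q + s powr q)/2) powr (1/q)"
  by (simp add: power_mean_def)

theorem mainTheorem16:
  fixes x1 x2 x3 :: "'a::metric_space" and p r t :: real
  assumes "p > 1" and "0 \<le> r" and "r < t"
  shows "mono_on {t..} (\<lambda>s. sqrt (Hbar p x1 r x2 s) + sqrt (Hbar p x2 s x3 t))"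
proof (rule mono_onI)
  fix s s' assume s: "s \<in> {t..}" and s': "s' \<in> {t..}" and ss: "s \<le> s'"
  define q where "q = 1 - p"
  have q: "q < 0" using assms unfolding q_def by simp
  define c1 where "c1 = cos (min (dist x1 x2) (pi/2))"
  define c2 where "c2 = cos (min (dist x2 x3) (pi/2))"
  have c1: "0 \<le> c1" "c1 \<le> 1" unfolding c1_def using cos_bounds[of "dist x1 x2"] by auto
  have c2: "0 \<le> c2" "c2 \<le> 1" unfolding c2_def using cos_bounds[of "dist x2 x3"] by auto
  have t0: "0 < t" "t \<le> s" "t \<le> s'" using assms s s' by auto
  have H1: "Hbar p x1 r x2 s \<le> Hbar p x1 r x2 s'"
  proof (cases "r = 0")
    case True
    then show ?thesis using ss t0 q by (simp add: Hbar_def power_mean_def q_def)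
  next
    case False
    then have r0: "0 < r" using assms by simp
    have "(r + s)/2 - c1 * ((r powr q + s powr q)/2) powr (1/q) \<le> (r + s')/2 - c1 * ((r powr q + s' powr q)/2) powr (1/q)"
      using mono_step[OF q r0 _ ss c1] assms t0 by (simp add: field_simps)
    then show ?thesis using r0 t0 q unfolding Hbar_def c1_def[symmetric] q_def[symmetric]
      by (simp add: pm1 pmq mult_ac)
  qed
  have H2: "Hbar p x2 s x3 t \<le> Hbar p x2 s' x3 t"
  proof -
    have "(s + t)/2 - c2 * ((t powr q + s powr q)/2) powr (1/q) \<le> (s' + t)/2 - c2 * ((t powr q + s' powr q)/2) powr (1/q)"
      using mono_step[OF q t0(1) t0(2) ss c2] by (simp add: field_simps)
    then show ?thesis using t0 q unfolding Hbar_def c2_def[symmetric] q_def[symmetric]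
      by (simp add: pm1 pmq add_ac mult_ac)
  qed
  show "sqrt (Hbar p x1 r x2 s) + sqrt (Hbar p x2 s x3 t) \<le> sqrt (Hbar p x1 r x2 s') + sqrt (Hbar p x2 s' x3 t)"
    using H1 H2 by (simp add: add_mono)
qed

end
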